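(* Let $A\in\mathbb C^{n\times n}$, $b\in\mathbb C^n$, and let $M, F\in\mathbb C^{n\times n}$ be nonsingular. Partition the index set $\{1,\dots,n\}$ into $m$ consecutive blocks, and write accordingly $x = (x^{(1)},\dots,x^{(m)})$, $b=(b^{(1)},\dots,b^{(m)})$, and $A = (A^{(s,q)})_{s,q=1}^m$ in block form; assume $M$ and $F$ are block diagonal with respect to this partition, with nonsingular diagonal blocks $M^{(1)},\dots,M^{(m)}$ and $F^{(1)},\dots,F^{(m)}$. Let $I$ be the $n\times n$ identity and \[ Q := \begin{bmatrix} 0 & I - M^{-1}A \\ I - F^{-1}A & 0 \end{bmatrix}. \] Consider any sequence of subsets $\Omega_k\subseteq\{1,\dots,m\}$, $k\in\mathbb N$, such that each $s\in\{1,\dots,m\}$ belongs to $\Omega_k$ for infinitely many $k$, and any functions $\delta_s(q,k)\in\mathbb N$ ($s,q\in\{1,\dots,m\}$, $k\in\mathbb N$) with $\delta_s(q,k)\le k$ and $\lim_{k\to\infty}\delta_s(q,k)=\infty$ for all $s,q$. Given an arbitrary initial vector $x^0$, define the asynchronous alternating iteration: for each $k\in\mathbb N$ and all $s\in\{1,\dots,m\}$, \[ y^{(s),k} := x^{(s),\delta_s(s,k)} + {M^{(s)}}^{-1}\Big(b^{(s)} - \sum_{q=1}^m A^{(s,q)} x^{(q),\delta_s(q,k)}\Big), \] \[ x^{(s),k+1} := \begin{cases} y^{(s),\delta_s(s,k)} + {F^{(s)}}^{-1}\Big(b^{(s)} - \displaystyle\sum_{q=1}^m A^{(s,q)} y^{(q),\delta_s(q,k)}\Big)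 & \text{if } s\in\Omega_k,\\[1ex] x^{(s),k} & \text{if } s\notin\Omega_k.\end{cases} \] If $\rho(|Q|)<1$, then for every initial guess $x^0$, every such sequence $\{\Omega_k\}$ and every such delay functions $\delta_1,\dots,\delta_m$, the sequence $x^k$ converges to the solution of $Ax=b$.
   Context: For a matrix $\mathcal A$, $|\mathcal A|$ denotes the entrywise absolute value (modulus) and $\rho(\mathcal A)$ denotes its spectral radius. *)

theory Defs
  imports "Jordan_Normal_Form.Spectral_Radius" "Jordan_Normal_Form.Gauss_Jordan_Elimination"
begin

text \<open>Consecutive block partition of the indices {0..<n} into m blocks, given by cut
points p 0 = 0 < p 1 < ... < p m = n; block s (for s < m) is {p s ..< p (Suc s)}.\<close>

definition consecutive_partition :: "nat \<Rightarrow> nat \<Rightarrow> (nat \<Rightarrow> nat) \<Rightarrow> bool" where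
  "consecutive_partition n m p \<longleftrightarrow> p 0 = 0 \<and> p m = n \<and> (\<forall>s<m. p s < p (Suc s))"

definition block_of :: "(nat \<Rightarrow> nat) \<Rightarrow> nat \<Rightarrow> nat \<Rightarrow> nat" where
  "block_of p m i = (THE s. s < m \<and> p s \<le> i \<and> i < p (Suc s))"

definition block_size :: "(nat \<Rightarrow> nat) \<Rightarrow> nat \<Rightarrow> nat" where
  "block_size p s = p (Suc s) - p s"

definition mblock :: "'a mat \<Rightarrow> (nat \<Rightarrow> nat) \<Rightarrow> nat \<Rightarrow> nat \<Rightarrow> 'a mat" where
  "mblock A p s q = mat (block_size p s) (block_size p q) (\<lambda>(i,j). A $$ (p s + i, p q + j))"

definition vblock :: "'a vec \<Rightarrow> (nat \<Rightarrow> nat) \<Rightarrow> nat \<Rightarrow> 'a vec" where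
  "vblock v p s = vec (block_size p s) (\<lambda>i. v $ (p s + i))"

definition block_diagonal :: "'a::zero mat \<Rightarrow> (nat \<Rightarrow> nat) \<Rightarrow> nat \<Rightarrow> bool" where
  "block_diagonal M p m \<longleftrightarrow>
     (\<forall>i<dim_row M. \<forall>j<dim_col M. block_of p m i \<noteq> block_of p m j \<longrightarrow> M $$ (i,j) = 0)"

definition mat_inv :: "'a::field mat \<Rightarrow> 'a mat" where
  "mat_inv B = (SOME C. C \<in> carrier_mat (dim_row B) (dim_row B) \<and>
                        B * C = 1\<^sub>m (dim_row B) \<and> C * B = 1\<^sub>m (dim_row B))"

definition abs_mat :: "complex mat \<Rightarrow> complex mat" where
  "abs_mat A = map_mat (\<lambda>z. complex_of_real (cmod z)) A"

definition block_row_sum ::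
  "complex mat \<Rightarrow> (nat \<Rightarrow> nat) \<Rightarrow> nat \<Rightarrow> nat \<Rightarrow> (nat \<Rightarrow> complex vec) \<Rightarrow> complex vec" where
  "block_row_sum A p m s z =
     vec (block_size p s) (\<lambda>i. \<Sum>q<m. (mblock A p s q *\<^sub>v z q) $ i)"

end

theory Submission
  imports Defs
begin

lemma delays_eventually:
  fixes \<delta> :: "nat \<Rightarrow> nat \<Rightarrow> nat \<Rightarrow> nat"
  assumes "\<forall>s<m. \<forall>q<m. filterlim (\<delta> s q) at_top at_top"
  shows "\<exists>K'. \<forall>k\<ge>K'. \<forall>s<m. \<forall>q<m. K \<le> \<delta> s q k"
proof -
  have "\<forall>\<^sub>F k in sequentially. \<forall>s\<in>{..<m}. \<forall>q\<in>{..<m}. K \<le> \<delta> s q k"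
    using assms by (auto intro!: eventually_ball_finite simp: filterlim_at_top)
  then show ?thesis unfolding eventually_at_top_linorder by auto
qed

lemma async_core:
  fixes ex ey :: "nat \<Rightarrow> nat \<Rightarrow> complex" and TM TF :: "nat \<Rightarrow> nat \<Rightarrow> complex"
    and ua ub :: "nat \<Rightarrow> real" and \<gamma> :: real and blk :: "nat \<Rightarrow> nat"
    and \<Omega> :: "nat \<Rightarrow> nat set" and \<delta> :: "nat \<Rightarrow> nat \<Rightarrow> nat \<Rightarrow> nat"
  assumes blk: "\<forall>i<n. blk i < m"
    and H1: "\<forall>k. \<forall>i<n. ey k i = (\<Sum>j<n. TM i j * ex (\<delta> (blk i) (blk j) k) j)"
    and H2: "\<forall>k. \<forall>i<n. ex (Suc k) i = (if blk i \<in> \<Omega> k then (\<Sum>j<n. TF i j * ey (\<delta> (blk i) (blk j) k) j) else ex k i)"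
    and W1: "\<forall>i<n. (\<Sum>j<n. cmod (TM i j) * ub j) \<le> \<gamma> * ua i"
    and W2: "\<forall>i<n. (\<Sum>j<n. cmod (TF i j) * ua j) \<le> \<gamma> * ub i"
    and ua: "\<forall>i<n. ua i > 0" and ub: "\<forall>i<n. ub i > 0"
    and g0: "0 \<le> \<gamma>" and g1: "\<gamma> < 1"
    and Omega_inf: "\<forall>s<m. infinite {k. s \<in> \<Omega> k}"
    and delay_le: "\<forall>s<m. \<forall>q<m. \<forall>k. \<delta> s q k \<le> k"
    and delay_lim: "\<forall>s<m. \<forall>q<m. filterlim (\<delta> s q) at_top at_top"
  shows "\<forall>i<n. (\<lambda>k. ex k i) \<longlonglongrightarrow> 0"
proof -
  have G1: "cmod (ey k i) \<le> \<gamma> * c * ua i"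
    if i: "i < n" and hb: "\<forall>j<n. cmod (ex (\<delta> (blk i) (blk j) k) j) \<le> c * ub j" for k i c
  proof -
    have "cmod (ey k i) = cmod (\<Sum>j<n. TM i j * ex (\<delta> (blk i) (blk j) k) j)" using H1 i by simp
    also have "\<dots> \<le> (\<Sum>j<n. cmod (TM i j * ex (\<delta> (blk i) (blk j) k) j))" by (rule norm_sum)
    also have "\<dots> \<le> (\<Sum>j<n. cmod (TM i j) * (c * ub j))"
      by (rule sum_mono) (use hb in \<open>auto simp: norm_mult intro!: mult_left_mono\<close>)
    also have "\<dots> = c * (\<Sum>j<n. cmod (TM i j) * ub j)" by (simp add: sum_distrib_left algebra_simps)
    also have "\<dots> \<le> c * (\<gamma> * ua i)"
    proof -
      have "c \<ge> 0"
      proof -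
        have "0 \<le> cmod (ex (\<delta> (blk i) (blk i) k) i)" by simp
        also have "\<dots> \<le> c * ub i" using hb i by auto
        finally have "0 \<le> c * ub i" .
        moreover have "0 < ub i" using ub i by auto
        ultimately show ?thesis by (simp add: zero_le_mult_iff)
      qed
      then show ?thesis using W1 i by (auto intro: mult_left_mono)
    qed
    finally show ?thesis by (simp add: algebra_simps)
  qed
  have G2: "cmod (ex (Suc k) i) \<le> \<gamma> * c * ub i"
    if i: "i < n" and upd: "blk i \<in> \<Omega> k" and hb: "\<forall>j<n. cmod (ey (\<delta> (blk i) (blk j) k) j) \<le> c * ua j" for k i c
  proof -
    have "cmod (ex (Suc k) i) = cmod (\<Sum>j<n. TF i j * ey (\<delta> (blk i) (blk j) k) j)" using H2 i upd by simp
    also have "\<dots> \<le> (\<Sum>j<n. cmod (TF i j * ey (\<delta> (blk i) (blk j) k) j))" by (rule norm_sum)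
    also have "\<dots> \<le> (\<Sum>j<n. cmod (TF i j) * (c * ua j))"
      by (rule sum_mono) (use hb in \<open>auto simp: norm_mult intro!: mult_left_mono\<close>)
    also have "\<dots> = c * (\<Sum>j<n. cmod (TF i j) * ua j)" by (simp add: sum_distrib_left algebra_simps)
    also have "\<dots> \<le> c * (\<gamma> * ub i)"
    proof -
      have "c \<ge> 0"
      proof -
        have "0 \<le> cmod (ey (\<delta> (blk i) (blk i) k) i)" by simp
        also have "\<dots> \<le> c * ua i" using hb i by auto
        finally have "0 \<le> c * ua i" .
        moreover have "0 < ua i" using ua i by auto
        ultimately show ?thesis by (simp add: zero_le_mult_iff)
      qed
      then show ?thesis using W2 i by (auto intro: mult_left_mono)
    qed
    finally show ?thesis by (simp add: algebra_simps)
  qed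
  have gle: "\<And>z. 0 \<le> z \<Longrightarrow> \<gamma> * z \<le> z" using g0 g1 by (simp add: mult_left_le_one_le)
  define C where "C = (\<Sum>i<n. cmod (ex 0 i) / ub i)"
  have C0: "C \<ge> 0" unfolding C_def using ub by (auto intro!: sum_nonneg)
  have Cb: "cmod (ex 0 i) \<le> C * ub i" if "i < n" for i
  proof -
    have "cmod (ex 0 i) / ub i \<le> C" unfolding C_def
      by (rule member_le_sum) (use that ub in auto)
    then show ?thesis using ub that by (simp add: divide_le_eq)
  qed
  have bound_all: "\<forall>i<n. cmod (ex k i) \<le> C * ub i" for k
  proof (induction k rule: less_induct)
    case (less k)
    show ?case
    proof (cases k)
      case 0 then show ?thesis using Cb by simp
    next
      case (Suc k')
      show ?thesis
      proof (intro allI impI)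
        fix i assume i: "i < n"
        show "cmod (ex k i) \<le> C * ub i"
        proof (cases "blk i \<in> \<Omega> k'")
          case False
          then show ?thesis using H2 i less Suc by auto
        next
          case True
          have "\<forall>j<n. cmod (ey (\<delta> (blk i) (blk j) k') j) \<le> C * ua j"
          proof (intro allI impI)
            fix j assume j: "j < n"
            let ?d = "\<delta> (blk i) (blk j) k'"
            have d: "?d \<le> k'" using delay_le blk i j by auto
            have "\<forall>l<n. cmod (ex (\<delta> (blk j) (blk l) ?d) l) \<le> C * ub l"
            proof (intro allI impI)
              fix l assume l: "l < n"
              have "\<delta> (blk j) (blk l) ?d \<le> ?d" using delay_le blk j l by auto
              then have "\<delta> (blk j) (blk l) ?d < k" using d Suc by auto
              then show "cmod (ex (\<delta> (blk j) (blk l) ?d) l) \<le> C * ub l" using less l by auto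
            qed
            from G1[OF j this] have "cmod (ey ?d j) \<le> \<gamma> * C * ua j" .
            also have "\<dots> \<le> C * ua j" using gle[of "C * ua j"] C0 ua j by (simp add: mult.assoc less_imp_le)
            finally show "cmod (ey ?d j) \<le> C * ua j" .
          qed
          from G2[OF i True this] have "cmod (ex (Suc k') i) \<le> \<gamma> * C * ub i" .
          also have "\<dots> \<le> C * ub i" using gle[of "C * ub i"] C0 ub i by (simp add: mult.assoc less_imp_le)
          finally show ?thesis using Suc by simp
        qed
      qed
    qed
  qed
  have level: "\<exists>K. \<forall>k\<ge>K. \<forall>i<n. cmod (ex k i) \<le> \<gamma>^t * C * ub i" for t
  proof (induction t)
    case 0 then show ?case using bound_all by auto
  next
    case (Suc t)
    then obtain K where K: "\<forall>k\<ge>K. \<forall>i<n. cmod (ex k i) \<le> \<gamma>^t * C * ub i" by blast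
    obtain K1 where K1: "\<forall>k\<ge>K1. \<forall>s<m. \<forall>q<m. K \<le> \<delta> s q k"
      using delays_eventually[OF delay_lim] by blast
    obtain K2 where K2: "\<forall>k\<ge>K2. \<forall>s<m. \<forall>q<m. K1 \<le> \<delta> s q k"
      using delays_eventually[OF delay_lim] by blast
    have Y: "cmod (ey k j) \<le> \<gamma> * (\<gamma>^t * C) * ua j" if "k \<ge> K1" "j < n" for k j
      by (rule G1) (use that K K1 blk in auto)
    have X: "cmod (ex (Suc k) i) \<le> \<gamma>^(Suc t) * C * ub i" if "k \<ge> K2" "i < n" "blk i \<in> \<Omega> k" for k i
    proof -
      have "cmod (ex (Suc k) i) \<le> \<gamma> * (\<gamma> * (\<gamma>^t * C)) * ub i"
        by (rule G2) (use that Y K2 blk in auto)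
      also have "\<dots> \<le> \<gamma>^(Suc t) * C * ub i"
      proof -
        have "\<gamma> * (\<gamma>^(Suc t) * C * ub i) \<le> \<gamma>^(Suc t) * C * ub i"
          using g0 g1 C0 ub that by (intro mult_left_le_one_le) auto
        then show ?thesis by (simp add: algebra_simps)
      qed
      finally show ?thesis .
    qed
    have "\<forall>s<m. \<exists>k\<ge>K2. s \<in> \<Omega> k"
      using Omega_inf by (auto simp: infinite_nat_iff_unbounded_le)
    then obtain g where g: "\<forall>s<m. g s \<ge> K2 \<and> s \<in> \<Omega> (g s)" by metis
    define K3 where "K3 = Suc (\<Sum>s<m. g s)"
    have gK3: "Suc (g s) \<le> K3" if "s < m" for s
      unfolding K3_def using member_le_sum[of s "{..<m}" g] that by auto
    have Z: "cmod (ex (Suc (g (blk i)) + j) i) \<le> \<gamma>^(Suc t) * C * ub i" if i: "i < n" for i j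
    proof (induction j)
      case 0 then show ?case using X[of "g (blk i)" i] g blk i by auto
    next
      case (Suc j)
      have ge: "Suc (g (blk i)) + j \<ge> K2" using g blk i by (metis le_add1 le_trans le_SucI)
      show ?case
      proof (cases "blk i \<in> \<Omega> (Suc (g (blk i)) + j)")
        case True then show ?thesis using X[OF ge i] by simp
      next
        case False then show ?thesis using H2 i Suc.IH by simp
      qed
    qed
    show ?case
    proof (intro exI allI impI)
      fix k i assume k: "K3 \<le> k" and i: "i < n"
      have "k = Suc (g (blk i)) + (k - Suc (g (blk i)))" using gK3[of "blk i"] blk i k by auto
      then show "cmod (ex k i) \<le> \<gamma>^(Suc t) * C * ub i" using Z[OF i, of "k - Suc (g (blk i))"] by metis
    qed
  qed
  show ?thesis
  proof (intro allI impI)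
    fix i assume i: "i < n"
    have lim: "(\<lambda>t. \<gamma>^t * (C * ub i)) \<longlonglongrightarrow> 0"
      using g0 g1 by (intro tendsto_mult_left_zero LIMSEQ_realpow_zero) auto
    show "(\<lambda>k. ex k i) \<longlonglongrightarrow> 0"
    proof (rule LIMSEQ_I)
      fix r :: real assume r: "0 < r"
      from LIMSEQ_D[OF lim r] obtain t where "norm (\<gamma>^t * (C * ub i) - 0) < r" by blast
      then have t: "\<gamma>^t * C * ub i < r" using g0 C0 ub i by (simp add: mult.assoc)
      from level[of t] obtain K where "\<forall>k\<ge>K. \<forall>i<n. cmod (ex k i) \<le> \<gamma>^t * C * ub i" by blast
      then show "\<exists>no. \<forall>k\<ge>no. norm (ex k i - 0) < r" using t i by (metis diff_zero order.strict_trans1)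
    qed
  qed
qed

lemma smult_mat_vec_eq: "v \<in> carrier_vec (dim_col A) \<Longrightarrow> (c \<cdot>\<^sub>m A) *\<^sub>v v = c \<cdot>\<^sub>v (A *\<^sub>v (v :: 'a :: comm_ring_1 vec))"
  by (rule eq_vecI) (auto simp: scalar_prod_def sum_distrib_left ac_simps)

lemma spectral_radius_smult_le:
  assumes A: "A \<in> carrier_mat N N" and N: "N > 0" and c: "c \<noteq> 0"
  shows "spectral_radius (c \<cdot>\<^sub>m A) \<le> cmod c * spectral_radius A"
proof -
  have cA: "c \<cdot>\<^sub>m A \<in> carrier_mat N N" using A by auto
  from spectral_radius_mem_max(1)[OF cA N] obtain ev where
    ev: "ev \<in> spectrum (c \<cdot>\<^sub>m A)" and eq: "spectral_radius (c \<cdot>\<^sub>m A) = cmod ev" by auto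
  from ev obtain v where v: "eigenvector (c \<cdot>\<^sub>m A) v ev"
    unfolding spectrum_def eigenvalue_def by auto
  have vc: "v \<in> carrier_vec N" "v \<noteq> 0\<^sub>v N" and e: "c \<cdot>\<^sub>v (A *\<^sub>v v) = ev \<cdot>\<^sub>v v"
    using v A unfolding eigenvector_def by (auto simp: smult_mat_vec_eq)
  have "A *\<^sub>v v = (1/c) \<cdot>\<^sub>v (c \<cdot>\<^sub>v (A *\<^sub>v v))" using c by (intro eq_vecI) auto
  also have "\<dots> = (ev / c) \<cdot>\<^sub>v v" unfolding e by (intro eq_vecI) auto
  finally have "eigenvector A v (ev / c)"
    using vc A unfolding eigenvector_def by auto
  then have "ev / c \<in> spectrum A" unfolding spectrum_def eigenvalue_def by auto
  from spectral_radius_mem_max(2)[OF A N imageI[OF this, of norm]]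
  have "cmod (ev / c) \<le> spectral_radius A" .
  then have "cmod ev \<le> cmod c * spectral_radius A" using c
    by (simp add: norm_divide divide_le_eq mult.commute)
  then show ?thesis using eq by simp
qed

lemma pow_mat_Suc_left: assumes A: "A \<in> carrier_mat n n"
  shows "A ^\<^sub>m Suc k = A * A ^\<^sub>m k"
proof (induction k)
  case 0 then show ?case using A by simp
next
  case (Suc k)
  have "A ^\<^sub>m Suc (Suc k) = (A * A ^\<^sub>m k) * A" using Suc by simp
  also have "\<dots> = A * (A ^\<^sub>m k * A)" using A by (simp add: assoc_mult_mat[of _ n n _ n _ n])
  finally show ?case by simp
qed

lemma smult_pow_mat: fixes c :: "'a :: comm_semiring_1" assumes A: "A \<in> carrier_mat n n"
  shows "(c \<cdot>\<^sub>m A) ^\<^sub>m k = c ^ k \<cdot>\<^sub>m (A ^\<^sub>m k)"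
proof (induction k)
  case 0 then show ?case using A by (intro eq_matI) auto
next
  case (Suc k)
  have "(c \<cdot>\<^sub>m A) ^\<^sub>m Suc k = (c ^ k \<cdot>\<^sub>m (A ^\<^sub>m k)) * (c \<cdot>\<^sub>m A)" using Suc by simp
  also have "\<dots> = c ^ Suc k \<cdot>\<^sub>m (A ^\<^sub>m Suc k)"
    using A by (intro eq_matI) (auto simp: scalar_prod_def sum_distrib_left intro!: sum.cong simp: algebra_simps)
  finally show ?case .
qed

lemma weights:
  fixes Q :: "complex mat"
  assumes Q: "Q \<in> carrier_mat N N" and N: "N > 0" and rho: "spectral_radius (abs_mat Q) < 1"
  shows "\<exists>u \<gamma>. (\<forall>i<N. u i > 0) \<and> 0 \<le> \<gamma> \<and> \<gamma> < 1 \<and>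
           (\<forall>i<N. (\<Sum>j<N. cmod (Q $$ (i,j)) * u j) \<le> \<gamma> * u i)"
proof -
  define R where "R = map_mat cmod Q"
  have R: "R \<in> carrier_mat N N" using Q unfolding R_def by auto
  have AQ: "abs_mat Q \<in> carrier_mat N N" using Q unfolding abs_mat_def by auto
  have B: "abs_mat Q = map_mat of_real R" unfolding abs_mat_def R_def using Q by (intro eq_matI) auto
  have Rnn: "\<forall>i<N. \<forall>j<N. 0 \<le> (R ^\<^sub>m k) $$ (i,j)" for k
  proof (induction k)
    case 0 then show ?case using R by auto
  next
    case (Suc k)
    then show ?case using R
      by (auto simp: scalar_prod_def R_def intro!: sum_nonneg mult_nonneg_nonneg)
  qed
  define \<rho> where "\<rho> = spectral_radius (abs_mat Q)"
  have \<rho>0: "0 \<le> \<rho>" using spectral_radius_mem_max(1)[OF AQ N] unfolding \<rho>_def by auto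
  define r where "r = (\<rho> + 1) / 2"
  have r0: "0 < r" and r1: "r < 1" and \<rho>r: "\<rho> < r" using \<rho>0 rho unfolding r_def \<rho>_def by auto
  define B' where "B' = complex_of_real (1/r) \<cdot>\<^sub>m abs_mat Q"
  have B'c: "B' \<in> carrier_mat N N" using AQ unfolding B'_def by auto
  have "spectral_radius B' \<le> cmod (complex_of_real (1/r)) * \<rho>"
    unfolding B'_def \<rho>_def by (rule spectral_radius_smult_le[OF AQ N]) (use r0 in auto)
  also have "\<dots> = \<rho> / r" using r0 by (simp add: norm_divide)
  also have "\<dots> < 1" using \<rho>r r0 by simp
  finally have "spectral_radius B' < 1" .
  from spectral_radius_jnf_norm_bound_less_1_upper_triangular[OF B'c this]
  obtain c where c: "\<forall>k. norm_bound (B' ^\<^sub>m k) c" by blast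
  have Rk: "(R ^\<^sub>m k) $$ (i,j) \<le> c * r^k" if "i < N" "j < N" for i j k
  proof -
    have "B' ^\<^sub>m k = complex_of_real (1/r) ^ k \<cdot>\<^sub>m (map_mat of_real R ^\<^sub>m k)"
      unfolding B'_def B by (rule smult_pow_mat) (use R in auto)
    also have "map_mat of_real R ^\<^sub>m k = map_mat of_real (R ^\<^sub>m k)"
      by (rule of_real_hom.mat_hom_pow[OF R, symmetric])
    finally have "norm ((B' ^\<^sub>m k) $$ (i,j)) = (1/r)^k * (R ^\<^sub>m k) $$ (i,j)"
      using that R Rnn r0 by (simp add: norm_mult norm_power norm_divide)
    moreover have "norm ((B' ^\<^sub>m k) $$ (i,j)) \<le> c" using c that B'c unfolding norm_bound_def by auto
    ultimately have "(1/r)^k * (R ^\<^sub>m k) $$ (i,j) \<le> c" by simp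
    then show ?thesis using r0 by (simp add: field_simps)
  qed
  have c0: "0 \<le> c" using Rk[OF N N, of 0] R N by simp
  have "(\<lambda>k. real N * c * r^k) \<longlonglongrightarrow> 0"
    using r0 r1 by (intro tendsto_mult_right_zero LIMSEQ_realpow_zero) auto
  from LIMSEQ_D[OF this, of "1/2"] obtain K where KK: "\<And>k. k \<ge> K \<Longrightarrow> norm (real N * c * r^k - 0) < 1/2" by auto
  have "norm (real N * c * r^(Suc K) - 0) < 1/2" by (rule KK) simp
  then have K: "real N * c * r^(Suc K) \<le> 1/2" using c0 r0 by simp
  define T where "T = Suc K"
  define f where "f k i = (\<Sum>j<N. (R ^\<^sub>m k) $$ (i,j))" for k i
  define u where "u i = (\<Sum>k<T. f k i)" for i
  have f0: "f 0 i = 1" if "i < N" for i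
    unfolding f_def using that R by (simp add: if_distrib sum.delta cong: if_cong)
  have fnn: "0 \<le> f k i" if "i < N" for k i unfolding f_def using Rnn that by (auto intro!: sum_nonneg)
  have fT: "f T i \<le> 1/2" if "i < N" for i
  proof -
    have "f T i \<le> (\<Sum>j<N. c * r^T)" unfolding f_def by (rule sum_mono) (use Rk that in auto)
    also have "\<dots> = real N * c * r^(Suc K)" by (simp add: T_def)
    finally show ?thesis using K by simp
  qed
  have u1: "u i \<ge> 1" if "i < N" for i
  proof -
    have "u i = f 0 i + (\<Sum>k<K. f (Suc k) i)" unfolding u_def T_def by (rule sum.lessThan_Suc_shift)
    moreover have "0 \<le> (\<Sum>k<K. f (Suc k) i)" using fnn that by (auto intro!: sum_nonneg)
    ultimately show ?thesis using f0 that by simp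
  qed
  have key: "(\<Sum>j<N. cmod (Q $$ (i,j)) * u j) \<le> u i - 1/2" if i: "i < N" for i
  proof -
    have "(\<Sum>j<N. cmod (Q $$ (i,j)) * u j) = (\<Sum>j<N. \<Sum>k<T. \<Sum>l<N. R $$ (i,j) * (R ^\<^sub>m k) $$ (j,l))"
      unfolding u_def f_def using i Q R_def by (auto simp: sum_distrib_left intro!: sum.cong)
    also have "\<dots> = (\<Sum>k<T. \<Sum>j<N. \<Sum>l<N. R $$ (i,j) * (R ^\<^sub>m k) $$ (j,l))"
      by (rule sum.swap)
    also have "\<dots> = (\<Sum>k<T. \<Sum>l<N. \<Sum>j<N. R $$ (i,j) * (R ^\<^sub>m k) $$ (j,l))"
      by (rule sum.cong[OF refl], rule sum.swap)
    also have "\<dots> = (\<Sum>k<T. f (Suc k) i)"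
      unfolding f_def
    proof (intro sum.cong refl)
      fix k l assume l: "l \<in> {..<N}"
      have "(R ^\<^sub>m Suc k) $$ (i,l) = (R * R ^\<^sub>m k) $$ (i,l)" using pow_mat_Suc_left[OF R] by simp
      also have "\<dots> = (\<Sum>j<N. R $$ (i,j) * (R ^\<^sub>m k) $$ (j,l))"
        using i l R by (auto simp: scalar_prod_def lessThan_atLeast0 intro!: sum.cong)
      finally show "(\<Sum>j<N. R $$ (i,j) * (R ^\<^sub>m k) $$ (j,l)) = (R ^\<^sub>m Suc k) $$ (i,l)" by simp
    qed
    also have "\<dots> = u i - f 0 i + f T i"
    proof -
      have "(\<Sum>k<Suc T. f k i) = f 0 i + (\<Sum>k<T. f (Suc k) i)" by (rule sum.lessThan_Suc_shift)
      moreover have "(\<Sum>k<Suc T. f k i) = u i + f T i" unfolding u_def by simp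
      ultimately show ?thesis by simp
    qed
    also have "\<dots> \<le> u i - 1/2" using f0[OF i] fT[OF i] by simp
    finally show ?thesis .
  qed
  define U where "U = (\<Sum>i<N. u i)"
  have uU: "u i \<le> U" if "i < N" for i
    unfolding U_def by (rule member_le_sum) (use u1 that in \<open>auto intro: order.trans[OF zero_le_one]\<close>)
  have U1: "U \<ge> 1" using uU[OF N] u1[OF N] by simp
  define \<gamma> where "\<gamma> = 1 - 1 / (2 * U)"
  show ?thesis
  proof (intro exI conjI allI impI)
    show "0 < u i" if "i < N" for i using u1[OF that] by simp
    show "0 \<le> \<gamma>" unfolding \<gamma>_def using U1 by (simp add: field_simps)
    show "\<gamma> < 1" unfolding \<gamma>_def using U1 by simp
    fix i assume i: "i < N"
    have "u i - 1/2 \<le> \<gamma> * u i"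
    proof -
      have "u i / (2 * U) \<le> 1/2" using uU[OF i] U1 by (simp add: field_simps)
      then show ?thesis unfolding \<gamma>_def by (simp add: algebra_simps)
    qed
    then show "(\<Sum>j<N. cmod (Q $$ (i,j)) * u j) \<le> \<gamma> * u i" using key[OF i] by simp
  qed
qed

lemma cover: fixes p :: "nat \<Rightarrow> nat" shows "p 0 \<le> i \<Longrightarrow> i < p m \<Longrightarrow> \<exists>s<m. p s \<le> i \<and> i < p (Suc s)"
proof (induction m)
  case 0 then show ?case by linarith
next
  case (Suc m)
  show ?case
  proof (cases "i < p m")
    case True then show ?thesis using Suc by (meson less_SucI)
  next
    case False then show ?thesis using Suc by (intro exI[of _ m]) auto
  qed
qed

lemma part_mono: assumes "consecutive_partition n m p" "s < t" "t \<le> m"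
  shows "p (Suc s) \<le> p t"
  using assms(2,3)
proof (induction t)
  case 0 then show ?case by simp
next
  case (Suc t)
  show ?case
  proof (cases "s = t")
    case True then show ?thesis by simp
  next
    case False
    then have "p (Suc s) \<le> p t" using Suc by auto
    also have "p t < p (Suc t)" using assms(1) Suc unfolding consecutive_partition_def by auto
    finally show ?thesis by simp
  qed
qed

lemma part_le_n: assumes "consecutive_partition n m p" "s < m"
  shows "p (Suc s) \<le> n"
  using part_mono[OF assms(1) assms(2) order_refl] assms(1) unfolding consecutive_partition_def by auto

lemma block_of_eq: assumes part: "consecutive_partition n m p" and s: "s < m"
  and i: "p s \<le> i" "i < p (Suc s)"
  shows "block_of p m i = s"
  unfolding block_of_def
proof (rule the_equality)
  show "s < m \<and> p s \<le> i \<and> i < p (Suc s)" using s i by auto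
  fix s' assume s': "s' < m \<and> p s' \<le> i \<and> i < p (Suc s')"
  show "s' = s"
  proof (rule ccontr)
    assume "s' \<noteq> s"
    then consider "s' < s" | "s < s'" by linarith
    then show False
    proof cases
      case 1 then have "p (Suc s') \<le> p s" using part_mono[OF part] s by auto
      then show False using s' i by auto
    next
      case 2 then have "p (Suc s) \<le> p s'" using part_mono[OF part] s' by auto
      then show False using s' i by auto
    qed
  qed
qed

lemma block_of_pl: assumes part: "consecutive_partition n m p" and s: "s < m"
  and l: "l < block_size p s"
  shows "block_of p m (p s + l) = s"
  by (rule block_of_eq[OF part s]) (use l in \<open>auto simp: block_size_def\<close>)

lemma index_decomp: assumes part: "consecutive_partition n m p" and i: "i < n"
  obtains s l where "s < m" "l < block_size p s" "i = p s + l" "block_of p m i = s"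
proof -
  from cover[of p i m] part i obtain s where s: "s < m" "p s \<le> i" "i < p (Suc s)"
    unfolding consecutive_partition_def by auto
  then show ?thesis using that[of s "i - p s"] block_of_eq[OF part s]
    by (auto simp: block_size_def)
qed

lemma blk_lt: assumes part: "consecutive_partition n m p" and i: "i < n"
  shows "block_of p m i < m"
  using index_decomp[OF part i] by metis

lemma sum_split_gen: assumes part: "consecutive_partition n m p" and k: "k \<le> m"
  shows "(\<Sum>j<p k. g j) = (\<Sum>q<k. \<Sum>l<block_size p q. g (p q + l))"
  using k
proof (induction k)
  case 0 then show ?case using part by (simp add: consecutive_partition_def)
next
  case (Suc k)
  have km: "k < m" using Suc.prems by simp
  have le: "p k \<le> p (Suc k)" using part km unfolding consecutive_partition_def by (simp add: less_imp_le)
  have "(\<Sum>j<p (Suc k). g j) = (\<Sum>j\<in>{0..<p k}. g j) + (\<Sum>j\<in>{p k..<p (Suc k)}. g j)"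
    using sum.atLeastLessThan_concat[of 0 "p k" "p (Suc k)" g] le by (simp add: lessThan_atLeast0)
  also have "(\<Sum>j\<in>{p k..<p (Suc k)}. g j) = (\<Sum>l<block_size p k. g (p k + l))"
    by (subst sum.atLeastLessThan_shift_0) (simp add: block_size_def lessThan_atLeast0 comp_def)
  finally show ?case using Suc by (simp add: lessThan_atLeast0)
qed

lemma sum_split: assumes part: "consecutive_partition n m p"
  shows "(\<Sum>j<n. g j) = (\<Sum>q<m. \<Sum>l<block_size p q. g (p q + l))"
  using sum_split_gen[OF part order_refl] part unfolding consecutive_partition_def by auto

lemma vblock_index[simp]: "l < block_size p s \<Longrightarrow> vblock v p s $ l = v $ (p s + l)"
  "dim_vec (vblock v p s) = block_size p s"
  unfolding vblock_def by auto

lemma mblock_carrier: "mblock A p s q \<in> carrier_mat (block_size p s) (block_size p q)"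
  unfolding mblock_def by auto

lemma pl_lt_n: assumes part: "consecutive_partition n m p" "s < m" "l < block_size p s"
  shows "p s + l < n"
  using part_le_n[OF assms(1,2)] assms(3) unfolding block_size_def by auto

lemma vblock_mult: assumes part: "consecutive_partition n m p"
  and A: "A \<in> carrier_mat n n" and v: "v \<in> carrier_vec n" and s: "s < m"
  shows "vblock (A *\<^sub>v v) p s = block_row_sum A p m s (\<lambda>q. vblock v p q)"
proof (rule eq_vecI)
  show "dim_vec (vblock (A *\<^sub>v v) p s) = dim_vec (block_row_sum A p m s (\<lambda>q. vblock v p q))"
    unfolding block_row_sum_def by simp
  fix l assume "l < dim_vec (block_row_sum A p m s (\<lambda>q. vblock v p q))"
  then have l: "l < block_size p s" unfolding block_row_sum_def by simp
  have i: "p s + l < n" by (rule pl_lt_n[OF part s l])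
  have "vblock (A *\<^sub>v v) p s $ l = (\<Sum>j<n. A $$ (p s + l, j) * v $ j)"
    using l i A v by (simp add: scalar_prod_def lessThan_atLeast0)
  also have "\<dots> = (\<Sum>q<m. \<Sum>l'<block_size p q. A $$ (p s + l, p q + l') * v $ (p q + l'))"
    by (rule sum_split[OF part])
  also have "\<dots> = block_row_sum A p m s (\<lambda>q. vblock v p q) $ l"
    unfolding block_row_sum_def using l
    by (auto simp: mblock_def scalar_prod_def lessThan_atLeast0 intro!: sum.cong)
  finally show "vblock (A *\<^sub>v v) p s $ l = block_row_sum A p m s (\<lambda>q. vblock v p q) $ l" .
qed

lemma block_row_sum_cong: "(\<And>q. q < m \<Longrightarrow> f q = g q) \<Longrightarrow> block_row_sum A p m s f = block_row_sum A p m s g"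
  unfolding block_row_sum_def by (auto intro!: sum.cong)

lemma vblock_bd: fixes M :: "complex mat" assumes part: "consecutive_partition n m p"
  and M: "M \<in> carrier_mat n n" and bd: "block_diagonal M p m" and v: "v \<in> carrier_vec n" and s: "s < m"
  shows "vblock (M *\<^sub>v v) p s = mblock M p s s *\<^sub>v vblock v p s"
proof -
  have "vblock (M *\<^sub>v v) p s = block_row_sum M p m s (\<lambda>q. vblock v p q)" by (rule vblock_mult[OF part M v s])
  also have "\<dots> = mblock M p s s *\<^sub>v vblock v p s"
  proof (rule eq_vecI)
    show "dim_vec (block_row_sum M p m s (\<lambda>q. vblock v p q)) = dim_vec (mblock M p s s *\<^sub>v vblock v p s)"
      unfolding block_row_sum_def mblock_def by simp
    fix l assume "l < dim_vec (mblock M p s s *\<^sub>v vblock v p s)"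
    then have l: "l < block_size p s" unfolding mblock_def by simp
    have zero: "(mblock M p s q *\<^sub>v vblock v p q) $ l = 0" if q: "q < m" "q \<noteq> s" for q
    proof -
      have "M $$ (p s + l, p q + l') = 0" if l': "l' < block_size p q" for l'
      proof -
        have "block_of p m (p s + l) \<noteq> block_of p m (p q + l')"
          using block_of_pl[OF part s l] block_of_pl[OF part q(1) l'] q by simp
        then show ?thesis using bd M pl_lt_n[OF part s l] pl_lt_n[OF part q(1) l']
          unfolding block_diagonal_def by auto
      qed
      then show ?thesis using l by (auto simp: mblock_def scalar_prod_def intro!: sum.neutral)
    qed
    have "block_row_sum M p m s (\<lambda>q. vblock v p q) $ l = (\<Sum>q<m. (mblock M p s q *\<^sub>v vblock v p q) $ l)"
      unfolding block_row_sum_def using l by simp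
    also have "\<dots> = (mblock M p s s *\<^sub>v vblock v p s) $ l"
      using zero s by (subst sum.remove[of _ s]) (auto intro!: sum.neutral)
    finally show "block_row_sum M p m s (\<lambda>q. vblock v p q) $ l = (mblock M p s s *\<^sub>v vblock v p s) $ l" .
  qed
  finally show ?thesis .
qed

lemma mat_inv_props: assumes B: "B \<in> carrier_mat k k" and inv: "invertible_mat B"
  shows "mat_inv B \<in> carrier_mat k k" "B * mat_inv B = 1\<^sub>m k" "mat_inv B * B = 1\<^sub>m k"
proof -
  from inv obtain C where C1: "B * C = 1\<^sub>m (dim_row B)" and C2: "C * B = 1\<^sub>m (dim_row C)"
    unfolding invertible_mat_def inverts_mat_def by auto
  have "dim_col C = k" using arg_cong[OF C1, of dim_col] B by simp
  moreover have "dim_row C = k" using arg_cong[OF C2, of dim_col] B by simp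
  ultimately have Cc: "C \<in> carrier_mat k k" by auto
  have ex: "\<exists>C. C \<in> carrier_mat (dim_row B) (dim_row B) \<and> B * C = 1\<^sub>m (dim_row B) \<and> C * B = 1\<^sub>m (dim_row B)"
    using Cc C1 C2 B by auto
  from someI_ex[OF ex] B show "mat_inv B \<in> carrier_mat k k" "B * mat_inv B = 1\<^sub>m k" "mat_inv B * B = 1\<^sub>m k"
    unfolding mat_inv_def by auto
qed

lemma vblock_inv: fixes M :: "complex mat" assumes part: "consecutive_partition n m p"
  and M: "M \<in> carrier_mat n n" and Mi: "invertible_mat M" and bd: "block_diagonal M p m"
  and Ms: "invertible_mat (mblock M p s s)" and w: "w \<in> carrier_vec n" and s: "s < m"
  shows "vblock (mat_inv M *\<^sub>v w) p s = mat_inv (mblock M p s s) *\<^sub>v vblock w p s"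
proof -
  note MI = mat_inv_props[OF M Mi]
  note MsI = mat_inv_props[OF mblock_carrier Ms]
  define v where "v = mat_inv M *\<^sub>v w"
  have v: "v \<in> carrier_vec n" unfolding v_def using MI w by auto
  have "M *\<^sub>v v = (M * mat_inv M) *\<^sub>v w" unfolding v_def by (rule assoc_mult_mat_vec[symmetric, OF M MI(1) w])
  also have "\<dots> = w" using MI(2) w by simp
  finally have "M *\<^sub>v v = w" .
  then have eq: "mblock M p s s *\<^sub>v vblock v p s = vblock w p s"
    using vblock_bd[OF part M bd v s] by simp
  have vb: "vblock v p s \<in> carrier_vec (block_size p s)" unfolding vblock_def by simp
  have "vblock v p s = (mat_inv (mblock M p s s) * mblock M p s s) *\<^sub>v vblock v p s"
    using MsI(3) vb by simp
  also have "\<dots> = mat_inv (mblock M p s s) *\<^sub>v (mblock M p s s *\<^sub>v vblock v p s)"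
    by (rule assoc_mult_mat_vec[OF MsI(1) mblock_carrier vb])
  also have "\<dots> = mat_inv (mblock M p s s) *\<^sub>v vblock w p s" using eq by simp
  finally show ?thesis unfolding v_def .
qed

lemma err_formula:
  fixes A Mi :: "complex mat"
  assumes A: "A \<in> carrier_mat n n" and Mi: "Mi \<in> carrier_mat n n" and z: "z \<in> carrier_vec n"
    and xs: "xs \<in> carrier_vec n" and b: "A *\<^sub>v xs = b" and i: "i < n"
  shows "(z + Mi *\<^sub>v (b - A *\<^sub>v z)) $ i - xs $ i = (\<Sum>j<n. (1\<^sub>m n - Mi * A) $$ (i,j) * (z $ j - xs $ j))"
proof -
  have "(z + Mi *\<^sub>v (b - A *\<^sub>v z)) $ i - xs $ i =
        z $ i - xs $ i + (\<Sum>j<n. Mi $$ (i,j) * ((\<Sum>l<n. A $$ (j,l) * xs $ l) - (\<Sum>l<n. A $$ (j,l) * z $ l)))"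
    unfolding b[symmetric] using A Mi z xs i
    by (simp add: scalar_prod_def lessThan_atLeast0 right_diff_distrib sum_subtractf mult.commute)
  also have "\<dots> = z $ i - xs $ i - (\<Sum>j<n. \<Sum>l<n. Mi $$ (i,j) * (A $$ (j,l) * (z $ l - xs $ l)))"
  proof -
    have "Mi $$ (i,j) * ((\<Sum>l<n. A $$ (j,l) * xs $ l) - (\<Sum>l<n. A $$ (j,l) * z $ l)) =
          - (\<Sum>l<n. Mi $$ (i,j) * (A $$ (j,l) * (z $ l - xs $ l)))" for j
      by (simp add: sum_distrib_left right_diff_distrib sum_subtractf)
    then show ?thesis by (simp add: sum_negf)
  qed
  also have "\<dots> = z $ i - xs $ i - (\<Sum>l<n. \<Sum>j<n. Mi $$ (i,j) * (A $$ (j,l) * (z $ l - xs $ l)))"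
    by (subst sum.swap) simp
  also have "\<dots> = (\<Sum>l<n. (1\<^sub>m n - Mi * A) $$ (i,l) * (z $ l - xs $ l))"
  proof -
    have "(\<Sum>l<n. (1\<^sub>m n - Mi * A) $$ (i,l) * (z $ l - xs $ l)) =
          (\<Sum>l<n. (if i = l then 1 else 0) * (z $ l - xs $ l)) - (\<Sum>l<n. (\<Sum>j<n. Mi $$ (i,j) * A $$ (j,l)) * (z $ l - xs $ l))"
      using A Mi i by (simp add: sum_subtractf[symmetric] scalar_prod_def lessThan_atLeast0 algebra_simps)
    also have "\<dots> = z $ i - xs $ i - (\<Sum>l<n. \<Sum>j<n. Mi $$ (i,j) * (A $$ (j,l) * (z $ l - xs $ l)))"
    proof -
      have "(\<Sum>l<n. (if i = l then 1 else 0) * (z $ l - xs $ l)) = (\<Sum>l<n. if i = l then z $ l - xs $ l else 0)"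
        by (rule sum.cong) auto
      also have "\<dots> = z $ i - xs $ i" using i by (simp add: sum.delta)
      finally show ?thesis by (simp add: sum_distrib_right mult.assoc)
    qed
    finally show ?thesis by simp
  qed
  finally show ?thesis .
qed

lemma vblock_plus: assumes part: "consecutive_partition n m p" and s: "s < m"
  and v: "v \<in> carrier_vec n" and w: "w \<in> carrier_vec n"
  shows "vblock (v + w) p s = vblock v p s + vblock w p s"
  using pl_lt_n[OF part s] v w by (intro eq_vecI) auto

lemma vblock_minus: assumes part: "consecutive_partition n m p" and s: "s < m"
  and v: "v \<in> carrier_vec n" and w: "w \<in> carrier_vec n"
  shows "vblock (v - w) p s = vblock v p s - vblock w p s"
  using pl_lt_n[OF part s] v w by (intro eq_vecI) auto

lemma mixed_step:
  fixes A M :: "complex mat" and b xs w :: "complex vec" and X :: "nat \<Rightarrow> complex vec"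
  assumes part: "consecutive_partition n m p"
    and A: "A \<in> carrier_mat n n" and M: "M \<in> carrier_mat n n" and Mi: "invertible_mat M"
    and bd: "block_diagonal M p m" and Ms: "\<forall>s<m. invertible_mat (mblock M p s s)"
    and b: "b \<in> carrier_vec n" and xs: "xs \<in> carrier_vec n" and sol: "A *\<^sub>v xs = b"
    and X: "\<forall>q. X q \<in> carrier_vec n" and w: "w \<in> carrier_vec n"
    and i: "i < n"
    and W: "vblock w p (block_of p m i) = vblock (X (block_of p m i)) p (block_of p m i) +
              mat_inv (mblock M p (block_of p m i) (block_of p m i)) *\<^sub>v
              (vblock b p (block_of p m i) - block_row_sum A p m (block_of p m i) (\<lambda>q. vblock (X q) p q))"
  shows "w $ i - xs $ i = (\<Sum>j<n. (1\<^sub>m n - mat_inv M * A) $$ (i,j) * (X (block_of p m j) $ j - xs $ j))"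
proof -
  obtain s l where s: "s < m" and l: "l < block_size p s" and il: "i = p s + l" and bs: "block_of p m i = s"
    using index_decomp[OF part i] by metis
  define z where "z = vec n (\<lambda>j. X (block_of p m j) $ j)"
  have z: "z \<in> carrier_vec n" unfolding z_def by simp
  have zb: "vblock z p q = vblock (X q) p q" if q: "q < m" for q
  proof (rule eq_vecI)
    fix l' assume "l' < dim_vec (vblock (X q) p q)"
    then have l': "l' < block_size p q" by simp
    show "vblock z p q $ l' = vblock (X q) p q $ l'"
      using l' pl_lt_n[OF part q l'] block_of_pl[OF part q l'] unfolding z_def by simp
  qed simp
  have MI: "mat_inv M \<in> carrier_mat n n" using mat_inv_props[OF M Mi] by auto
  have bz: "b - A *\<^sub>v z \<in> carrier_vec n" using b A z by auto
  have "vblock w p s = vblock z p s + mat_inv (mblock M p s s) *\<^sub>v (vblock b p s - vblock (A *\<^sub>v z) p s)"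
    using W unfolding bs zb[OF s, symmetric] vblock_mult[OF part A z s]
    using block_row_sum_cong[of m "\<lambda>q. vblock (X q) p q" "\<lambda>q. vblock z p q" A p s] zb by simp
  also have "vblock b p s - vblock (A *\<^sub>v z) p s = vblock (b - A *\<^sub>v z) p s"
    using vblock_minus[OF part s b, of "A *\<^sub>v z"] A z by simp
  also have "mat_inv (mblock M p s s) *\<^sub>v vblock (b - A *\<^sub>v z) p s = vblock (mat_inv M *\<^sub>v (b - A *\<^sub>v z)) p s"
    using vblock_inv[OF part M Mi bd _ bz s] Ms s by simp
  also have "vblock z p s + vblock (mat_inv M *\<^sub>v (b - A *\<^sub>v z)) p s = vblock (z + mat_inv M *\<^sub>v (b - A *\<^sub>v z)) p s"
    using vblock_plus[OF part s z, of "mat_inv M *\<^sub>v (b - A *\<^sub>v z)"] MI bz by simp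
  finally have "vblock w p s $ l = vblock (z + mat_inv M *\<^sub>v (b - A *\<^sub>v z)) p s $ l" by simp
  then have "w $ i = (z + mat_inv M *\<^sub>v (b - A *\<^sub>v z)) $ i" using l il by simp
  then have "w $ i - xs $ i = (\<Sum>j<n. (1\<^sub>m n - mat_inv M * A) $$ (i,j) * (z $ j - xs $ j))"
    using err_formula[OF A MI z xs sol i] by simp
  also have "\<dots> = (\<Sum>j<n. (1\<^sub>m n - mat_inv M * A) $$ (i,j) * (X (block_of p m j) $ j - xs $ j))"
    unfolding z_def by (rule sum.cong) auto
  finally show ?thesis .
qed

lemma sum_lessThan_add_split:
  fixes g :: "nat \<Rightarrow> 'a :: comm_monoid_add"
  shows "(\<Sum>j<a+b. g j) = (\<Sum>j<a. g j) + (\<Sum>j<b. g (a+j))"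
proof -
  have "(\<Sum>j<a+b. g j) = (\<Sum>j\<in>{0..<a}. g j) + (\<Sum>j\<in>{a..<a+b}. g j)"
    using sum.atLeastLessThan_concat[of 0 a "a+b" g] by (simp add: lessThan_atLeast0)
  also have "(\<Sum>j\<in>{a..<a+b}. g j) = (\<Sum>j<b. g (a+j))"
    by (subst sum.atLeastLessThan_shift_0) (simp add: lessThan_atLeast0 comp_def)
  finally show ?thesis by (simp add: lessThan_atLeast0)
qed

theorem theorem3:
  fixes n m :: nat
    and p :: "nat \<Rightarrow> nat"
    and A M F :: "complex mat"
    and b :: "complex vec"
    and \<Omega> :: "nat \<Rightarrow> nat set"
    and \<delta> :: "nat \<Rightarrow> nat \<Rightarrow> nat \<Rightarrow> nat"
    and x y :: "nat \<Rightarrow> complex vec"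
  assumes part: "consecutive_partition n m p"
    and A: "A \<in> carrier_mat n n"
    and b: "b \<in> carrier_vec n"
    and M: "M \<in> carrier_mat n n" and M_inv: "invertible_mat M"
    and F: "F \<in> carrier_mat n n" and F_inv: "invertible_mat F"
    and M_bd: "block_diagonal M p m" and F_bd: "block_diagonal F p m"
    and M_blocks: "\<forall>s<m. invertible_mat (mblock M p s s)"
    and F_blocks: "\<forall>s<m. invertible_mat (mblock F p s s)"
    and rho: "spectral_radius (abs_mat
                (four_block_mat (0\<^sub>m n n) (1\<^sub>m n - mat_inv M * A)
                                (1\<^sub>m n - mat_inv F * A) (0\<^sub>m n n))) < 1"
    and Omega_sub: "\<forall>k. \<Omega> k \<subseteq> {..<m}"
    and Omega_inf: "\<forall>s<m. infinite {k. s \<in> \<Omega> k}"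
    and delay_le: "\<forall>s<m. \<forall>q<m. \<forall>k. \<delta> s q k \<le> k"
    and delay_lim: "\<forall>s<m. \<forall>q<m. filterlim (\<delta> s q) at_top at_top"
    and x_dim: "\<forall>k. x k \<in> carrier_vec n"
    and y_dim: "\<forall>k. y k \<in> carrier_vec n"
    and y_def: "\<forall>k. \<forall>s<m. vblock (y k) p s =
                  vblock (x (\<delta> s s k)) p s +
                  mat_inv (mblock M p s s) *\<^sub>v
                    (vblock b p s - block_row_sum A p m s (\<lambda>q. vblock (x (\<delta> s q k)) p q))"
    and x_def: "\<forall>k. \<forall>s<m. vblock (x (Suc k)) p s =
                  (if s \<in> \<Omega> k then
                     vblock (y (\<delta> s s k)) p s +
                     mat_inv (mblock F p s s) *\<^sub>v
                       (vblock b p s - block_row_sum A p m s (\<lambda>q. vblock (y (\<delta> s q k)) p q))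
                   else vblock (x k) p s)"
  shows "\<exists>xs \<in> carrier_vec n. A *\<^sub>v xs = b \<and>
           (\<forall>z \<in> carrier_vec n. A *\<^sub>v z = b \<longrightarrow> z = xs) \<and>
           (\<forall>i<n. (\<lambda>k. x k $ i) \<longlonglongrightarrow> xs $ i)"
proof (cases "n = 0")
  case True
  show ?thesis
  proof (intro bexI[of _ "0\<^sub>v n"] conjI ballI impI allI)
    show "A *\<^sub>v 0\<^sub>v n = b" using A b True by (intro eq_vecI) auto
    show "z = 0\<^sub>v n" if "z \<in> carrier_vec n" for z using that True by (intro eq_vecI) auto
  qed (use True in auto)
next
  case False
  then have n0: "n > 0" by simp
  define TM where "TM = 1\<^sub>m n - mat_inv M * A"
  define TF where "TF = 1\<^sub>m n - mat_inv F * A"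
  have MI: "mat_inv M \<in> carrier_mat n n" using mat_inv_props[OF M M_inv] by auto
  have FI: "mat_inv F \<in> carrier_mat n n" using mat_inv_props[OF F F_inv] by auto
  have TMc: "TM \<in> carrier_mat n n" unfolding TM_def using MI A by auto
  have TFc: "TF \<in> carrier_mat n n" unfolding TF_def using FI A by auto
  define Q where "Q = four_block_mat (0\<^sub>m n n) TM TF (0\<^sub>m n n)"
  have Qc: "Q \<in> carrier_mat (n+n) (n+n)" unfolding Q_def using TMc TFc by auto
  from weights[OF Qc _ rho[folded TM_def TF_def, folded Q_def]] n0
  obtain u \<gamma> where upos: "\<forall>i<n+n. u i > 0" and g0: "0 \<le> \<gamma>" and g1: "\<gamma> < 1"
    and uw: "\<forall>i<n+n. (\<Sum>j<n+n. cmod (Q $$ (i,j)) * u j) \<le> \<gamma> * u i" by auto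
  have W1: "\<forall>i<n. (\<Sum>j<n. cmod (TM $$ (i,j)) * u (n+j)) \<le> \<gamma> * u i"
  proof (intro allI impI)
    fix i assume i: "i < n"
    have "(\<Sum>j<n+n. cmod (Q $$ (i,j)) * u j) = (\<Sum>j<n. cmod (TM $$ (i,j)) * u (n+j))"
      unfolding sum_lessThan_add_split Q_def using i TMc TFc by simp
    moreover have "i < n+n" using i by simp
    with uw have "(\<Sum>j<n+n. cmod (Q $$ (i,j)) * u j) \<le> \<gamma> * u i" by blast
    ultimately show "(\<Sum>j<n. cmod (TM $$ (i,j)) * u (n+j)) \<le> \<gamma> * u i" by simp
  qed
  have W2: "\<forall>i<n. (\<Sum>j<n. cmod (TF $$ (i,j)) * u j) \<le> \<gamma> * u (n+i)"
  proof (intro allI impI)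
    fix i assume i: "i < n"
    have "(\<Sum>j<n+n. cmod (Q $$ (n+i,j)) * u j) = (\<Sum>j<n. cmod (TF $$ (i,j)) * u j)"
      unfolding sum_lessThan_add_split Q_def using i TMc TFc by simp
    moreover have "n+i < n+n" using i by simp
    with uw have "(\<Sum>j<n+n. cmod (Q $$ (n+i,j)) * u j) \<le> \<gamma> * u (n+i)" by blast
    ultimately show "(\<Sum>j<n. cmod (TF $$ (i,j)) * u j) \<le> \<gamma> * u (n+i)" by simp
  qed
  have u1: "\<forall>i<n. u i > 0" and u2: "\<forall>i<n. u (n+i) > 0" using upos by auto
  have A0: "A *\<^sub>v 0\<^sub>v n = 0\<^sub>v n" using A by (intro eq_vecI) (auto simp: scalar_prod_def)
  have kernel: "z = 0\<^sub>v n" if z: "z \<in> carrier_vec n" and Az: "A *\<^sub>v z = 0\<^sub>v n" for z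
  proof -
    have fix_pt: "(z + Mi *\<^sub>v (0\<^sub>v n - A *\<^sub>v z)) = z" if "Mi \<in> carrier_mat n n" for Mi
    proof -
      have "Mi *\<^sub>v (0\<^sub>v n - A *\<^sub>v z) = 0\<^sub>v n" unfolding Az using that
        by (intro eq_vecI) (auto simp: scalar_prod_def)
      then show ?thesis using z by simp
    qed
    have E: "z $ i = (\<Sum>j<n. (1\<^sub>m n - Mi * A) $$ (i,j) * z $ j)" if "Mi \<in> carrier_mat n n" "i < n" for Mi i
      using err_formula[OF A that(1) z _ A0 that(2)] fix_pt[OF that(1)] that(2) by simp
    have "\<forall>i<n. (\<lambda>k. z $ i) \<longlonglongrightarrow> 0"
    proof (rule async_core[where ex = "\<lambda>k i. z $ i" and ey = "\<lambda>k i. z $ i"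
          and TM = "\<lambda>i j. TM $$ (i,j)" and TF = "\<lambda>i j. TF $$ (i,j)"
          and ua = u and ub = "\<lambda>j. u (n+j)" and blk = "\<lambda>_. 0" and m = 1
          and \<Omega> = "\<lambda>_. {0}" and \<delta> = "\<lambda>s q k. k" and \<gamma> = \<gamma>])
      show "\<forall>k. \<forall>i<n. z $ i = (\<Sum>j<n. TM $$ (i,j) * z $ j)"
      proof (intro allI impI)
        fix k i assume i: "i < n"
        show "z $ i = (\<Sum>j<n. TM $$ (i,j) * z $ j)" unfolding TM_def by (rule E[OF MI i])
      qed
      show "\<forall>k. \<forall>i<n. z $ i = (if 0 \<in> {0} then \<Sum>j<n. TF $$ (i,j) * z $ j else z $ i)"
      proof (intro allI impI)
        fix k i assume i: "i < n"
        have zi: "z $ i = (\<Sum>j<n. TF $$ (i,j) * z $ j)" unfolding TF_def by (rule E[OF FI i])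
        show "z $ i = (if 0 \<in> {0} then \<Sum>j<n. TF $$ (i,j) * z $ j else z $ i)"
          by (subst if_P[OF singletonI]) (fact zi)
      qed
      show "\<forall>s<1. \<forall>q<1. filterlim (\<lambda>k. k) at_top at_top" by (simp add: filterlim_ident)
    qed (use W1 W2 u1 u2 g0 g1 in simp_all)
    then show ?thesis using z by (intro eq_vecI) (auto simp: LIMSEQ_const_iff)
  qed
  have "det A \<noteq> 0"
  proof
    assume "det A = 0"
    then obtain v where v1: "v \<in> carrier_vec n" and v2: "v \<noteq> 0\<^sub>v n" and v3: "A *\<^sub>v v = 0\<^sub>v n"
      using det_0_iff_vec_prod_zero[OF A] by blast
    show False using kernel[OF v1 v3] v2 by simp
  qed
  from det_non_zero_imp_unit[OF A this] obtain B where B: "B \<in> carrier_mat n n" and AB: "A * B = 1\<^sub>m n"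
    unfolding Units_def ring_mat_def by auto
  define xs where "xs = B *\<^sub>v b"
  have xs: "xs \<in> carrier_vec n" unfolding xs_def using B b by auto
  have "A *\<^sub>v xs = (A * B) *\<^sub>v b" unfolding xs_def by (rule assoc_mult_mat_vec[symmetric, OF A B b])
  then have sol: "A *\<^sub>v xs = b" using AB b by simp
  show ?thesis
  proof (intro bexI[OF _ xs] conjI ballI impI allI)
    show "A *\<^sub>v xs = b" by (rule sol)
    fix z assume z: "z \<in> carrier_vec n" and Az: "A *\<^sub>v z = b"
    have "A *\<^sub>v (z - xs) = 0\<^sub>v n" using A z xs Az sol b by (simp add: mult_minus_distrib_mat_vec)
    moreover have "z - xs \<in> carrier_vec n" using z xs by simp
    ultimately have zx: "z - xs = 0\<^sub>v n" using kernel by blast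
    show "z = xs"
    proof (rule eq_vecI)
      fix i assume "i < dim_vec xs"
      then have i: "i < n" using xs by simp
      have "(z - xs) $ i = 0" using zx i by simp
      then show "z $ i = xs $ i" using i z xs by simp
    qed (use z xs in simp)
  next
    have blk: "\<forall>i<n. block_of p m i < m" using blk_lt[OF part] by auto
    have conv: "\<forall>i<n. (\<lambda>k. x k $ i - xs $ i) \<longlonglongrightarrow> 0"
    proof (rule async_core[where ex = "\<lambda>k i. x k $ i - xs $ i" and ey = "\<lambda>k i. y k $ i - xs $ i"
          and TM = "\<lambda>i j. TM $$ (i,j)" and TF = "\<lambda>i j. TF $$ (i,j)"
          and ua = u and ub = "\<lambda>j. u (n+j)" and blk = "block_of p m" and m = m
          and \<Omega> = \<Omega> and \<delta> = \<delta> and \<gamma> = \<gamma>])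
      show "\<forall>k. \<forall>i<n. y k $ i - xs $ i = (\<Sum>j<n. TM $$ (i,j) * (x (\<delta> (block_of p m i) (block_of p m j) k) $ j - xs $ j))"
      proof (intro allI impI)
        fix k i assume i: "i < n"
        show "y k $ i - xs $ i = (\<Sum>j<n. TM $$ (i,j) * (x (\<delta> (block_of p m i) (block_of p m j) k) $ j - xs $ j))"
          unfolding TM_def
        proof (rule mixed_step[OF part A M M_inv M_bd M_blocks b xs sol _ _ i, where X = "\<lambda>q. x (\<delta> (block_of p m i) q k)"])
          show "\<forall>q. x (\<delta> (block_of p m i) q k) \<in> carrier_vec n" using x_dim by blast
          show "y k \<in> carrier_vec n" using y_dim by blast
          have s: "block_of p m i < m" using blk i by blast
          show "vblock (y k) p (block_of p m i) = vblock (x (\<delta> (block_of p m i) (block_of p m i) k)) p (block_of p m i) +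
              mat_inv (mblock M p (block_of p m i) (block_of p m i)) *\<^sub>v
              (vblock b p (block_of p m i) - block_row_sum A p m (block_of p m i) (\<lambda>q. vblock (x (\<delta> (block_of p m i) q k)) p q))"
            by (rule y_def[rule_format, OF s])
        qed
      qed
      show "\<forall>k. \<forall>i<n. x (Suc k) $ i - xs $ i = (if block_of p m i \<in> \<Omega> k
              then \<Sum>j<n. TF $$ (i,j) * (y (\<delta> (block_of p m i) (block_of p m j) k) $ j - xs $ j)
              else x k $ i - xs $ i)"
      proof (intro allI impI)
        fix k i assume i: "i < n"
        let ?s = "block_of p m i"
        have s: "?s < m" using blk i by auto
        show "x (Suc k) $ i - xs $ i = (if ?s \<in> \<Omega> k
              then \<Sum>j<n. TF $$ (i,j) * (y (\<delta> ?s (block_of p m j) k) $ j - xs $ j)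
              else x k $ i - xs $ i)"
        proof (cases "?s \<in> \<Omega> k")
          case True
          have "x (Suc k) $ i - xs $ i = (\<Sum>j<n. TF $$ (i,j) * (y (\<delta> ?s (block_of p m j) k) $ j - xs $ j))"
            unfolding TF_def
          proof (rule mixed_step[OF part A F F_inv F_bd F_blocks b xs sol _ _ i, where X = "\<lambda>q. y (\<delta> ?s q k)"])
            show "\<forall>q. y (\<delta> ?s q k) \<in> carrier_vec n" using y_dim by blast
            show "x (Suc k) \<in> carrier_vec n" using x_dim by blast
            have "vblock (x (Suc k)) p ?s = (if ?s \<in> \<Omega> k then
                     vblock (y (\<delta> ?s ?s k)) p ?s +
                     mat_inv (mblock F p ?s ?s) *\<^sub>v
                       (vblock b p ?s - block_row_sum A p m ?s (\<lambda>q. vblock (y (\<delta> ?s q k)) p q))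
                   else vblock (x k) p ?s)" by (rule x_def[rule_format, OF s])
            then show "vblock (x (Suc k)) p ?s = vblock (y (\<delta> ?s ?s k)) p ?s +
                     mat_inv (mblock F p ?s ?s) *\<^sub>v
                       (vblock b p ?s - block_row_sum A p m ?s (\<lambda>q. vblock (y (\<delta> ?s q k)) p q))"
              using True by simp
          qed
          then show ?thesis using True by simp
        next
          case False
          obtain s' l where s': "s' < m" and l: "l < block_size p s'" and il: "i = p s' + l" and bs: "?s = s'"
            using index_decomp[OF part i] by metis
          have "vblock (x (Suc k)) p s' = (if s' \<in> \<Omega> k then
                     vblock (y (\<delta> s' s' k)) p s' +
                     mat_inv (mblock F p s' s') *\<^sub>v
                       (vblock b p s' - block_row_sum A p m s' (\<lambda>q. vblock (y (\<delta> s' q k)) p q))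
                   else vblock (x k) p s')" by (rule x_def[rule_format, OF s'])
          then have "vblock (x (Suc k)) p s' $ l = vblock (x k) p s' $ l" using False bs by simp
          then show ?thesis using False l il by simp
        qed
      qed
    qed (fact blk W1 W2 u1 u2 g0 g1 Omega_inf delay_le delay_lim)+
    fix i assume i: "i < n"
    have "(\<lambda>k. x k $ i - xs $ i) \<longlonglongrightarrow> 0" using conv i by blast
    then show "(\<lambda>k. x k $ i) \<longlonglongrightarrow> xs $ i" by (rule iffD1[OF LIM_zero_iff])
  qed
qed

end
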